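(* Let $\Omega\subset\mathbb{R}^2$ be a bounded domain and $h>0$, with the discrete setting described in the context. For a discrete triple $(\vec U^*,\vec v^*,\omega^* )$ with $\vec U^*=(U^*_x,U^*_y)$ a grid vector field on the edges, $\vec v^*\in\mathbb{R}^2$, $\omega^*\in\mathbb{R}$, define the discrete kinetic energy \[ E_h(\vec U^*,\vec v^*,\omega^* )=\tfrac12\sum_{i,j}\big((\rho H(U_x^* )^2)_{i+1/2,j}+(\rho H(U_y^* )^2)_{i,j+1/2}\big)h^2+\tfrac12m|\vec v^*|^2+\tfrac12\omega^*\mathbb{I}\omega^*. \] Let $p\in\{1_{\Omega^h}\}^\perp$ be the solution of $L^hp=-\operatorname{D}(H\vec U^* )+\vec v^*\cdot\operatorname{G}H+\omega^*\vec J^h$ in $\Omega^h$, and let \[ (\vec U,\vec v,\omega)=(\vec U^*,\vec v^*,\omega^* )-\Big(\tfrac1\rho\operatorname{G}p,\;\tfrac1m\sum_{k,l}(p\operatorname{G}H)_{kl}h^2,\;\mathbb{I}^{-1}\sum_{k,l}(p\vec J^h)_{kl}h^2\Big). \] Then $E_h(\vec U^*,\vec v^*,\omega^* )\ge E_h(\vec U,\vec v,\omega)$.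
   Context: Grid: $x_i=ih$, $y_j=jh$, $x_{i\pm1/2}=(i\pm\frac12)h$; $C_{ij}=[x_{i-1/2},x_{i+1/2}]\times[y_{j-1/2},y_{j+1/2}]$, edges $E_{i+1/2,j}=\{x_{i+1/2}\}\times[y_{j-1/2},y_{j+1/2}]$, $E_{i,j+1/2}=[x_{i-1/2},x_{i+1/2}]\times\{y_{j+1/2}\}$. $\Omega^h=\{(x_i,y_j):C_{ij}\cap\Omega\ne\emptyset\}$. Heaviside: $H_{i+1/2,j}=\mathrm{length}(E_{i+1/2,j}\cap\Omega)/h$, $H_{i,j+1/2}=\mathrm{length}(E_{i,j+1/2}\cap\Omega)/h$. $(\operatorname{G}_xp)_{i+1/2,j}=(p_{i+1,j}-p_{ij})/h$, $(\operatorname{G}_yp)_{i,j+1/2}=(p_{i,j+1}-p_{ij})/h$, $\operatorname{G}p=(\operatorname{G}_xp,\operatorname{G}_yp)$; $(\operatorname{D}(u,v))_{ij}=(u_{i+1/2,j}-u_{i-1/2,j})/h+(v_{i,j+1/2}-v_{i,j-1/2})/h$; $(\operatorname{G}H)_{ij}=((H_{i+1/2,j}-H_{i-1/2,j})/h,(H_{i,j+1/2}-H_{i,j-1/2})/h)$. $\vec J^h_{ij}=(\tilde{\vec x}_{ij}-\vec c)\times(\operatorname{G}H)_{ij}$ (planar cross product $a_1b_2-a_2b_1$), $\vec c\in\mathbb{R}^2$ fixed, $\tilde{\vec x}_{ij}=\frac12(\vec x+\vec y)$ if $\partial C_{ij}\cap\partial\Omega=\{\vec x,\vec y\}$ and $0$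 if $\partial C_{ij}\cap\partial\Omega=\emptyset$. Constants $\rho,m>0$, inertia $\mathbb{I}>0$ (scalar). $(L^hp)_{ij}=-(\operatorname{D}(\frac H\rho\operatorname{G}p))_{ij}+(\operatorname{G}H)_{ij}\cdot\frac1m\sum_{k,l}p_{kl}(\operatorname{G}H)_{kl}h^2+\vec J^h_{ij}\mathbb{I}^{-1}\sum_{k,l}p_{kl}\vec J^h_{kl}h^2$ for $p:\Omega^h\to\mathbb{R}$, sums over $\Omega^h$. $\{1_{\Omega^h}\}^\perp=\{p:\sum_{\Omega^h}p=0\}$. *)

theory Defs
  imports "HOL-Analysis.Analysis"
begin

text \<open>Grid cells and edges are indexed by
  integer pairs: cell (i,j) is C_ij; the x-edge (i,j) stands for E_{i+1/2,j} and the
  y-edge (i,j) stands for E_{i,j+1/2}. Edge fields Ux, Uy :: int*int => real are indexed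
  accordingly: Ux (i,j) = (U_x)_{i+1/2,j}, Uy (i,j) = (U_y)_{i,j+1/2}.\<close>

definition cell :: "real \<Rightarrow> int \<Rightarrow> int \<Rightarrow> (real \<times> real) set" where
  "cell h i j = {(real_of_int i - 1/2) * h .. (real_of_int i + 1/2) * h}
              \<times> {(real_of_int j - 1/2) * h .. (real_of_int j + 1/2) * h}"

definition Omega_h :: "(real \<times> real) set \<Rightarrow> real \<Rightarrow> (int \<times> int) set" where
  "Omega_h \<Omega> h = {(i, j). cell h i j \<inter> \<Omega> \<noteq> {}}"

text \<open>Finite index sets of edges that carry the whole sum over all edges
  (every edge not listed here is disjoint from Omega, so its Heaviside value is 0).\<close>
definition edges_x :: "(real \<times> real) set \<Rightarrow> real \<Rightarrow> (int \<times> int) set" where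
  "edges_x \<Omega> h = {(i, j). (i, j) \<in> Omega_h \<Omega> h \<or> (i + 1, j) \<in> Omega_h \<Omega> h}"

definition edges_y :: "(real \<times> real) set \<Rightarrow> real \<Rightarrow> (int \<times> int) set" where
  "edges_y \<Omega> h = {(i, j). (i, j) \<in> Omega_h \<Omega> h \<or> (i, j + 1) \<in> Omega_h \<Omega> h}"

definition Hx :: "(real \<times> real) set \<Rightarrow> real \<Rightarrow> int \<times> int \<Rightarrow> real" where
  "Hx \<Omega> h = (\<lambda>(i, j). measure lborel
      {t \<in> {(real_of_int j - 1/2) * h .. (real_of_int j + 1/2) * h}.
         ((real_of_int i + 1/2) * h, t) \<in> \<Omega>} / h)"

definition Hy :: "(real \<times> real) set \<Rightarrow> real \<Rightarrow> int \<times> int \<Rightarrow> real" where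
  "Hy \<Omega> h = (\<lambda>(i, j). measure lborel
      {s \<in> {(real_of_int i - 1/2) * h .. (real_of_int i + 1/2) * h}.
         (s, (real_of_int j + 1/2) * h) \<in> \<Omega>} / h)"

definition Gx :: "real \<Rightarrow> (int \<times> int \<Rightarrow> real) \<Rightarrow> int \<times> int \<Rightarrow> real" where
  "Gx h p = (\<lambda>(i, j). (p (i + 1, j) - p (i, j)) / h)"

definition Gy :: "real \<Rightarrow> (int \<times> int \<Rightarrow> real) \<Rightarrow> int \<times> int \<Rightarrow> real" where
  "Gy h p = (\<lambda>(i, j). (p (i, j + 1) - p (i, j)) / h)"

definition Dh :: "real \<Rightarrow> (int \<times> int \<Rightarrow> real) \<Rightarrow> (int \<times> int \<Rightarrow> real) \<Rightarrow> int \<times> int \<Rightarrow> real" where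
  "Dh h u v = (\<lambda>(i, j). (u (i, j) - u (i - 1, j)) / h + (v (i, j) - v (i, j - 1)) / h)"

definition GH :: "(real \<times> real) set \<Rightarrow> real \<Rightarrow> int \<times> int \<Rightarrow> real \<times> real" where
  "GH \<Omega> h = (\<lambda>(i, j). ((Hx \<Omega> h (i, j) - Hx \<Omega> h (i - 1, j)) / h,
                        (Hy \<Omega> h (i, j) - Hy \<Omega> h (i, j - 1)) / h))"

definition cross2 :: "real \<times> real \<Rightarrow> real \<times> real \<Rightarrow> real" where
  "cross2 a b = fst a * snd b - snd a * fst b"

definition dot2 :: "real \<times> real \<Rightarrow> real \<times> real \<Rightarrow> real" where
  "dot2 a b = fst a * fst b + snd a * snd b"

definition xtilde :: "(real \<times> real) set \<Rightarrow> real \<Rightarrow> int \<times> int \<Rightarrow> real \<times> real" where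
  "xtilde \<Omega> h = (\<lambda>(i, j).
     if \<exists>a b. frontier (cell h i j) \<inter> frontier \<Omega> = {a, b}
     then (SOME z. \<exists>a b. frontier (cell h i j) \<inter> frontier \<Omega> = {a, b} \<and> z = (1/2) *\<^sub>R (a + b))
     else 0)"

definition Jh :: "(real \<times> real) set \<Rightarrow> real \<Rightarrow> real \<times> real \<Rightarrow> int \<times> int \<Rightarrow> real" where
  "Jh \<Omega> h c = (\<lambda>ij. cross2 (xtilde \<Omega> h ij - c) (GH \<Omega> h ij))"

definition Lh :: "(real \<times> real) set \<Rightarrow> real \<Rightarrow> real \<times> real \<Rightarrow> real \<Rightarrow> real \<Rightarrow> real
                  \<Rightarrow> (int \<times> int \<Rightarrow> real) \<Rightarrow> int \<times> int \<Rightarrow> real" where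
  "Lh \<Omega> h c \<rho> m II p = (\<lambda>ij.
      - Dh h (\<lambda>e. Hx \<Omega> h e / \<rho> * Gx h p e) (\<lambda>e. Hy \<Omega> h e / \<rho> * Gy h p e) ij
      + dot2 (GH \<Omega> h ij) ((1 / m) *\<^sub>R (\<Sum>kl\<in>Omega_h \<Omega> h. (p kl * h^2) *\<^sub>R GH \<Omega> h kl))
      + Jh \<Omega> h c ij * (1 / II) * (\<Sum>kl\<in>Omega_h \<Omega> h. p kl * Jh \<Omega> h c kl * h^2))"

definition Eh :: "(real \<times> real) set \<Rightarrow> real \<Rightarrow> real \<Rightarrow> real \<Rightarrow> real
                  \<Rightarrow> (int \<times> int \<Rightarrow> real) \<Rightarrow> (int \<times> int \<Rightarrow> real) \<Rightarrow> real \<times> real \<Rightarrow> real \<Rightarrow> real" where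
  "Eh \<Omega> h \<rho> m II Ux Uy v \<omega> =
      1/2 * ((\<Sum>e\<in>edges_x \<Omega> h. \<rho> * Hx \<Omega> h e * (Ux e)^2 * h^2)
           + (\<Sum>e\<in>edges_y \<Omega> h. \<rho> * Hy \<Omega> h e * (Uy e)^2 * h^2))
      + 1/2 * m * (norm v)^2 + 1/2 * \<omega> * II * \<omega>"

end

theory Submission
  imports Defs
begin

lemma sbp:
  fixes S :: "'a set" and u p :: "'a \<Rightarrow> real"
  assumes fg: "\<forall>e. f (g e) = e" and gf: "\<forall>e. g (f e) = e" and fin: "finite S"
    and van: "\<forall>e. (e \<notin> S \<or> f e \<notin> S) \<longrightarrow> u e = 0"
  shows "(\<Sum>e\<in>S. p e * (u e - u (g e))) = - (\<Sum>e\<in>{e. e \<in> S \<or> f e \<in> S}. u e * (p (f e) - p e))"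
proof -
  let ?E = "{e. e \<in> S \<or> f e \<in> S}"
  have sub: "?E \<subseteq> S \<union> g ` S" using gf by auto (metis image_eqI)
  have finE: "finite ?E" using finite_subset[OF sub] fin by auto
  have 1: "(\<Sum>e\<in>S. p e * u e) = (\<Sum>e\<in>?E. p e * u e)"
    by (rule sum.mono_neutral_left[OF finE]) (use van in auto)
  have injg: "inj g" by (metis fg injI)
  have "(\<Sum>e\<in>S. p e * u (g e)) = (\<Sum>e\<in>g ` S. p (f e) * u e)"
    by (subst sum.reindex) (use injg fg in \<open>auto simp: inj_on_def\<close>)
  also have "\<dots> = (\<Sum>e\<in>?E. p (f e) * u e)"
  proof (rule sum.mono_neutral_left[OF finE])
    show "g ` S \<subseteq> ?E" using fg by auto
    show "\<forall>i\<in>?E - g ` S. p (f i) * u i = 0"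
    proof
      fix e assume "e \<in> ?E - g ` S"
      hence "f e \<notin> S" using gf by (metis DiffD2 image_eqI)
      thus "p (f e) * u e = 0" using van by auto
    qed
  qed
  finally have 2: "(\<Sum>e\<in>S. p e * u (g e)) = (\<Sum>e\<in>?E. p (f e) * u e)" .
  have "(\<Sum>e\<in>S. p e * (u e - u (g e))) = (\<Sum>e\<in>S. p e * u e) - (\<Sum>e\<in>S. p e * u (g e))"
    by (simp add: right_diff_distrib sum_subtractf)
  also have "\<dots> = (\<Sum>e\<in>?E. p e * u e) - (\<Sum>e\<in>?E. p (f e) * u e)" using 1 2 by simp
  also have "\<dots> = - (\<Sum>e\<in>?E. u e * (p (f e) - p e))"
    by (simp add: sum_subtractf[symmetric] sum_negf[symmetric] algebra_simps)
  finally show ?thesis .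
qed

lemma Hx_zero:
  assumes "h > 0" and "(i,j) \<notin> Omega_h \<Omega> h \<or> (i+1,j) \<notin> Omega_h \<Omega> h"
  shows "Hx \<Omega> h (i,j) = 0"
proof -
  have E: "{t \<in> {(real_of_int j - 1/2) * h .. (real_of_int j + 1/2) * h}.
         ((real_of_int i + 1/2) * h, t) \<in> \<Omega>} = {}"
  proof (rule ccontr)
    assume "\<not> ?thesis"
    then obtain t where t: "t \<in> {(real_of_int j - 1/2) * h .. (real_of_int j + 1/2) * h}"
      "((real_of_int i + 1/2) * h, t) \<in> \<Omega>" by auto
    have a: "((real_of_int i + 1/2) * h, t) \<in> cell h i j"
      using t(1) assms(1) by (auto simp: cell_def mult_right_mono)
    have b: "((real_of_int i + 1/2) * h, t) \<in> cell h (i+1) j"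
      using t(1) assms(1) by (auto simp: cell_def mult_right_mono algebra_simps)
    show False using assms(2) a b t(2) by (auto simp: Omega_h_def)
  qed
  show ?thesis unfolding Hx_def case_prod_conv by (subst E) simp
qed

lemma Hy_zero:
  assumes "h > 0" and "(i,j) \<notin> Omega_h \<Omega> h \<or> (i,j+1) \<notin> Omega_h \<Omega> h"
  shows "Hy \<Omega> h (i,j) = 0"
proof -
  have E: "{s \<in> {(real_of_int i - 1/2) * h .. (real_of_int i + 1/2) * h}.
         (s, (real_of_int j + 1/2) * h) \<in> \<Omega>} = {}"
  proof (rule ccontr)
    assume "\<not> ?thesis"
    then obtain t where t: "t \<in> {(real_of_int i - 1/2) * h .. (real_of_int i + 1/2) * h}"
      "(t, (real_of_int j + 1/2) * h) \<in> \<Omega>" by auto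
    have a: "(t, (real_of_int j + 1/2) * h) \<in> cell h i j"
      using t(1) assms(1) by (auto simp: cell_def mult_right_mono)
    have b: "(t, (real_of_int j + 1/2) * h) \<in> cell h i (j+1)"
      using t(1) assms(1) by (auto simp: cell_def mult_right_mono algebra_simps)
    show False using assms(2) a b t(2) by (auto simp: Omega_h_def)
  qed
  show ?thesis unfolding Hy_def case_prod_conv by (subst E) simp
qed

lemma Hx_nonneg: "h > 0 \<Longrightarrow> Hx \<Omega> h e \<ge> 0"
  by (cases e) (simp add: Hx_def)

lemma Hy_nonneg: "h > 0 \<Longrightarrow> Hy \<Omega> h e \<ge> 0"
  by (cases e) (simp add: Hy_def)

lemma Dsum:
  fixes S :: "(int \<times> int) set" and u v p :: "int \<times> int \<Rightarrow> real"
  assumes fin: "finite S" and h: "h > 0"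
    and vu: "\<forall>i j. ((i,j) \<notin> S \<or> (i+1,j) \<notin> S) \<longrightarrow> u (i,j) = 0"
    and vv: "\<forall>i j. ((i,j) \<notin> S \<or> (i,j+1) \<notin> S) \<longrightarrow> v (i,j) = 0"
  shows "(\<Sum>ij\<in>S. p ij * Dh h u v ij * h^2) =
     - (\<Sum>e\<in>{(i,j). (i,j) \<in> S \<or> (i+1,j) \<in> S}. u e * Gx h p e * h^2)
     - (\<Sum>e\<in>{(i,j). (i,j) \<in> S \<or> (i,j+1) \<in> S}. v e * Gy h p e * h^2)"
proof -
  let ?fx = "\<lambda>(i::int,j::int). (i+1,j)" and ?gx = "\<lambda>(i::int,j::int). (i-1,j)"
  let ?fy = "\<lambda>(i::int,j::int). (i,j+1)" and ?gy = "\<lambda>(i::int,j::int). (i,j-1)"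
  have ex: "{(i,j). (i,j) \<in> S \<or> (i+1,j) \<in> S} = {e. e \<in> S \<or> ?fx e \<in> S}" by auto
  have ey: "{(i,j). (i,j) \<in> S \<or> (i,j+1) \<in> S} = {e. e \<in> S \<or> ?fy e \<in> S}" by auto
  have X: "(\<Sum>e\<in>S. p e * (u e - u (?gx e))) = - (\<Sum>e\<in>{e. e \<in> S \<or> ?fx e \<in> S}. u e * (p (?fx e) - p e))"
    by (rule sbp) (use fin vu in auto)
  have Y: "(\<Sum>e\<in>S. p e * (v e - v (?gy e))) = - (\<Sum>e\<in>{e. e \<in> S \<or> ?fy e \<in> S}. v e * (p (?fy e) - p e))"
    by (rule sbp) (use fin vv in auto)
  have "(\<Sum>ij\<in>S. p ij * Dh h u v ij * h^2) =
      (\<Sum>ij\<in>S. h * (p ij * (u ij - u (?gx ij))) + h * (p ij * (v ij - v (?gy ij))))"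
    by (rule sum.cong) (use h in \<open>auto simp: Dh_def field_simps power2_eq_square\<close>)
  also have "\<dots> = h * (\<Sum>e\<in>S. p e * (u e - u (?gx e))) + h * (\<Sum>e\<in>S. p e * (v e - v (?gy e)))"
    by (simp add: sum.distrib sum_distrib_left)
  also have "\<dots> = - (\<Sum>e\<in>{e. e \<in> S \<or> ?fx e \<in> S}. h * (u e * (p (?fx e) - p e)))
                  - (\<Sum>e\<in>{e. e \<in> S \<or> ?fy e \<in> S}. h * (v e * (p (?fy e) - p e)))"
    unfolding X Y by (simp add: sum_distrib_left)
  also have "\<dots> = - (\<Sum>e\<in>{e. e \<in> S \<or> ?fx e \<in> S}. u e * Gx h p e * h^2)
                  - (\<Sum>e\<in>{e. e \<in> S \<or> ?fy e \<in> S}. v e * Gy h p e * h^2)"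
    using h by (intro arg_cong2[where f="(-)"] arg_cong[where f=uminus] sum.cong refl)
       (auto simp: Gx_def Gy_def field_simps power2_eq_square split: prod.splits)
  finally show ?thesis unfolding ex ey .
qed

lemma dot2_sum: "dot2 (\<Sum>x\<in>A. f x) w = (\<Sum>x\<in>A. dot2 (f x) w)"
  by (simp add: dot2_def fst_sum snd_sum sum_distrib_right sum.distrib)

theorem theorem4p9:
  fixes \<Omega> :: "(real \<times> real) set" and h \<rho> m II :: real and c :: "real \<times> real"
    and Ux_s Uy_s :: "int \<times> int \<Rightarrow> real" and v_s :: "real \<times> real" and \<omega>_s :: real
    and p :: "int \<times> int \<Rightarrow> real"
  assumes "open \<Omega>" and "connected \<Omega>" and "bounded \<Omega>" and "\<Omega> \<noteq> {}"
    and "h > 0" and "\<rho> > 0" and "m > 0" and "II > 0"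
    and "(\<Sum>ij\<in>Omega_h \<Omega> h. p ij) = 0"
    and "\<forall>ij\<in>Omega_h \<Omega> h. Lh \<Omega> h c \<rho> m II p ij =
           - Dh h (\<lambda>e. Hx \<Omega> h e * Ux_s e) (\<lambda>e. Hy \<Omega> h e * Uy_s e) ij
           + dot2 v_s (GH \<Omega> h ij) + \<omega>_s * Jh \<Omega> h c ij"
  shows "Eh \<Omega> h \<rho> m II Ux_s Uy_s v_s \<omega>_s \<ge>
         Eh \<Omega> h \<rho> m II
           (\<lambda>e. Ux_s e - Gx h p e / \<rho>)
           (\<lambda>e. Uy_s e - Gy h p e / \<rho>)
           (v_s - (1 / m) *\<^sub>R (\<Sum>kl\<in>Omega_h \<Omega> h. (p kl * h^2) *\<^sub>R GH \<Omega> h kl))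
           (\<omega>_s - (1 / II) * (\<Sum>kl\<in>Omega_h \<Omega> h. p kl * Jh \<Omega> h c kl * h^2))"
proof -
  note h = \<open>h > 0\<close> and rho = \<open>\<rho> > 0\<close> and mpos = \<open>m > 0\<close> and IIpos = \<open>II > 0\<close>
  define S where "S = Omega_h \<Omega> h"
  define Ex_e where "Ex_e = edges_x \<Omega> h"
  define Ey_e where "Ey_e = edges_y \<Omega> h"
  define gx where "gx = Gx h p"
  define gy where "gy = Gy h p"
  define a where "a = (\<Sum>kl\<in>S. (p kl * h^2) *\<^sub>R GH \<Omega> h kl)"
  define b where "b = (\<Sum>kl\<in>S. p kl * Jh \<Omega> h c kl * h^2)"
  define HX where "HX = Hx \<Omega> h"
  define HY where "HY = Hy \<Omega> h"
  have Ex_ed: "Ex_e = {(i,j). (i,j) \<in> S \<or> (i+1,j) \<in> S}" by (simp add: Ex_e_def S_def edges_x_def)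
  have Ey_ed: "Ey_e = {(i,j). (i,j) \<in> S \<or> (i,j+1) \<in> S}" by (simp add: Ey_e_def S_def edges_y_def)
  have SEX: "S \<subseteq> Ex_e" "S \<subseteq> Ey_e" unfolding Ex_ed Ey_ed by auto
  show ?thesis
  proof (cases "finite S")
    case False
    have "infinite Ex_e" "infinite Ey_e" using SEX False infinite_super by blast+
    thus ?thesis using False
      by (simp add: Eh_def S_def[symmetric] Ex_e_def[symmetric] Ey_e_def[symmetric])
  next
    case fin: True
    have finEX: "finite Ex_e" unfolding Ex_ed
      by (rule finite_subset[where B="S \<union> (\<lambda>(i,j). (i - 1, j)) ` S"])
         (use fin in \<open>auto simp: image_iff\<close>, force)
    have finEY: "finite Ey_e" unfolding Ey_ed
      by (rule finite_subset[where B="S \<union> (\<lambda>(i,j). (i, j - 1)) ` S"])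
         (use fin in \<open>auto simp: image_iff\<close>, force)
    have vx: "\<forall>i j. ((i,j) \<notin> S \<or> (i+1,j) \<notin> S) \<longrightarrow> HX (i,j) = 0"
      using Hx_zero[OF h] by (simp add: HX_def S_def)
    have vy: "\<forall>i j. ((i,j) \<notin> S \<or> (i,j+1) \<notin> S) \<longrightarrow> HY (i,j) = 0"
      using Hy_zero[OF h] by (simp add: HY_def S_def)
    define A where "A = (\<Sum>e\<in>Ex_e. HX e * Ux_s e * gx e * h^2)"
    define B where "B = (\<Sum>e\<in>Ey_e. HY e * Uy_s e * gy e * h^2)"
    define Qx where "Qx = (\<Sum>e\<in>Ex_e. HX e * gx e * gx e * h^2)"
    define Qy where "Qy = (\<Sum>e\<in>Ey_e. HY e * gy e * gy e * h^2)"
    have D1: "(\<Sum>ij\<in>S. p ij * Dh h (\<lambda>e. HX e * Ux_s e) (\<lambda>e. HY e * Uy_s e) ij * h^2) = - A - B"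
      unfolding A_def B_def Ex_ed Ey_ed gx_def gy_def
      by (subst Dsum[OF fin h]) (use vx vy in \<open>auto simp: mult.assoc\<close>)
    have D2: "(\<Sum>ij\<in>S. p ij * Dh h (\<lambda>e. HX e / \<rho> * gx e) (\<lambda>e. HY e / \<rho> * gy e) ij * h^2)
              = - Qx / \<rho> - Qy / \<rho>"
      unfolding Qx_def Qy_def Ex_ed Ey_ed gx_def gy_def
      by (subst Dsum[OF fin h]) (use vx vy in \<open>auto simp: sum_divide_distrib intro!: sum.cong arg_cong2[where f="(-)"]\<close>)
    have eq: "\<And>ij. ij \<in> S \<Longrightarrow> p ij * Lh \<Omega> h c \<rho> m II p ij * h^2 = p ij * (- Dh h (\<lambda>e. HX e * Ux_s e) (\<lambda>e. HY e * Uy_s e) ij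
           + dot2 v_s (GH \<Omega> h ij) + \<omega>_s * Jh \<Omega> h c ij) * h^2"
      using assms(10) by (simp add: S_def HX_def HY_def)
    have L: "(\<Sum>ij\<in>S. p ij * Lh \<Omega> h c \<rho> m II p ij * h^2) =
        - (\<Sum>ij\<in>S. p ij * Dh h (\<lambda>e. HX e / \<rho> * gx e) (\<lambda>e. HY e / \<rho> * gy e) ij * h^2)
        + (\<Sum>ij\<in>S. dot2 ((p ij * h^2) *\<^sub>R GH \<Omega> h ij) ((1/m) *\<^sub>R a))
        + (\<Sum>ij\<in>S. p ij * Jh \<Omega> h c ij * h^2) * (1/II) * b"
    proof -
      have "(\<Sum>ij\<in>S. p ij * (- Dh h (\<lambda>e. HX e / \<rho> * gx e) (\<lambda>e. HY e / \<rho> * gy e) ij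
            + dot2 (GH \<Omega> h ij) ((1 / m) *\<^sub>R a) + Jh \<Omega> h c ij * (1 / II) * b) * h^2)
          = (\<Sum>ij\<in>S. - (p ij * Dh h (\<lambda>e. HX e / \<rho> * gx e) (\<lambda>e. HY e / \<rho> * gy e) ij * h^2)
            + dot2 ((p ij * h^2) *\<^sub>R GH \<Omega> h ij) ((1/m) *\<^sub>R a) + (p ij * Jh \<Omega> h c ij * h^2) * (1/II) * b)"
        by (rule sum.cong) (simp_all add: dot2_def algebra_simps)
      also have "\<dots> = - (\<Sum>ij\<in>S. p ij * Dh h (\<lambda>e. HX e / \<rho> * gx e) (\<lambda>e. HY e / \<rho> * gy e) ij * h^2)
        + (\<Sum>ij\<in>S. dot2 ((p ij * h^2) *\<^sub>R GH \<Omega> h ij) ((1/m) *\<^sub>R a))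
        + (\<Sum>ij\<in>S. p ij * Jh \<Omega> h c ij * h^2) * (1/II) * b"
        by (simp add: sum.distrib sum_negf sum_distrib_right sum_subtractf sum_divide_distrib)
      also note fin_eq = calculation
      have lh: "\<And>ij. Lh \<Omega> h c \<rho> m II p ij = - Dh h (\<lambda>e. HX e / \<rho> * gx e) (\<lambda>e. HY e / \<rho> * gy e) ij
            + dot2 (GH \<Omega> h ij) ((1 / m) *\<^sub>R a) + Jh \<Omega> h c ij * (1 / II) * b"
        unfolding Lh_def S_def a_def b_def HX_def HY_def gx_def gy_def ..
      show ?thesis unfolding lh by (rule fin_eq)
    qed
    have R: "(\<Sum>ij\<in>S. p ij * (- Dh h (\<lambda>e. HX e * Ux_s e) (\<lambda>e. HY e * Uy_s e) ij
           + dot2 v_s (GH \<Omega> h ij) + \<omega>_s * Jh \<Omega> h c ij) * h^2) =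
        - (\<Sum>ij\<in>S. p ij * Dh h (\<lambda>e. HX e * Ux_s e) (\<lambda>e. HY e * Uy_s e) ij * h^2)
        + (\<Sum>ij\<in>S. dot2 ((p ij * h^2) *\<^sub>R GH \<Omega> h ij) v_s)
        + \<omega>_s * (\<Sum>ij\<in>S. p ij * Jh \<Omega> h c ij * h^2)"
    proof -
      have "(\<Sum>ij\<in>S. p ij * (- Dh h (\<lambda>e. HX e * Ux_s e) (\<lambda>e. HY e * Uy_s e) ij
           + dot2 v_s (GH \<Omega> h ij) + \<omega>_s * Jh \<Omega> h c ij) * h^2) =
        (\<Sum>ij\<in>S. - (p ij * Dh h (\<lambda>e. HX e * Ux_s e) (\<lambda>e. HY e * Uy_s e) ij * h^2)
        + dot2 ((p ij * h^2) *\<^sub>R GH \<Omega> h ij) v_s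
        + \<omega>_s * (p ij * Jh \<Omega> h c ij * h^2))"
        by (rule sum.cong) (simp_all add: dot2_def algebra_simps)
      also have "\<dots> = - (\<Sum>ij\<in>S. p ij * Dh h (\<lambda>e. HX e * Ux_s e) (\<lambda>e. HY e * Uy_s e) ij * h^2)
        + (\<Sum>ij\<in>S. dot2 ((p ij * h^2) *\<^sub>R GH \<Omega> h ij) v_s)
        + \<omega>_s * (\<Sum>ij\<in>S. p ij * Jh \<Omega> h c ij * h^2)"
        by (simp add: sum.distrib sum_negf sum_distrib_left sum_subtractf)
      finally show ?thesis .
    qed
    have main: "Qx / \<rho> + Qy / \<rho> + dot2 a a / m + b * b / II = A + B + dot2 a v_s + \<omega>_s * b"
    proof -
      have "(\<Sum>ij\<in>S. p ij * Lh \<Omega> h c \<rho> m II p ij * h^2) = (\<Sum>ij\<in>S. p ij * (- Dh h (\<lambda>e. HX e * Ux_s e) (\<lambda>e. HY e * Uy_s e) ij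
           + dot2 v_s (GH \<Omega> h ij) + \<omega>_s * Jh \<Omega> h c ij) * h^2)" using eq by (rule sum.cong[OF refl])
      hence "- (- Qx / \<rho> - Qy / \<rho>) + dot2 a ((1/m) *\<^sub>R a) + b * (1/II) * b = A + B + dot2 a v_s + \<omega>_s * b"
        unfolding L R D1 D2 dot2_sum[symmetric] a_def[symmetric] b_def[symmetric] by simp
      thus ?thesis by (simp add: dot2_def add_divide_distrib)
    qed
    have Qx0: "Qx \<ge> 0" unfolding Qx_def HX_def
    proof (intro sum_nonneg)
      fix e
      have eqq: "Hx \<Omega> h e * gx e * gx e * h^2 = Hx \<Omega> h e * ((gx e)^2 * h^2)"
        by (simp add: power2_eq_square algebra_simps)
      show "0 \<le> Hx \<Omega> h e * gx e * gx e * h^2" unfolding eqq using Hx_nonneg[OF h, of \<Omega> e]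
        by (intro mult_nonneg_nonneg) simp_all
    qed
    have Qy0: "Qy \<ge> 0" unfolding Qy_def HY_def
    proof (intro sum_nonneg)
      fix e
      have eqq: "Hy \<Omega> h e * gy e * gy e * h^2 = Hy \<Omega> h e * ((gy e)^2 * h^2)"
        by (simp add: power2_eq_square algebra_simps)
      show "0 \<le> Hy \<Omega> h e * gy e * gy e * h^2" unfolding eqq using Hy_nonneg[OF h, of \<Omega> e]
        by (intro mult_nonneg_nonneg) simp_all
    qed
    have Ex: "(\<Sum>e\<in>Ex_e. \<rho> * HX e * (Ux_s e - gx e / \<rho>)^2 * h^2)
        = (\<Sum>e\<in>Ex_e. \<rho> * HX e * (Ux_s e)^2 * h^2) - 2 * A + Qx / \<rho>"
    proof -
      have "(\<Sum>e\<in>Ex_e. \<rho> * HX e * (Ux_s e - gx e / \<rho>)^2 * h^2)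
        = (\<Sum>e\<in>Ex_e. \<rho> * HX e * (Ux_s e)^2 * h^2 - 2 * (HX e * Ux_s e * gx e * h^2) + HX e * gx e * gx e * h^2 / \<rho>)"
        using rho by (intro sum.cong) (auto simp: field_simps power2_eq_square)
      thus ?thesis unfolding A_def Qx_def
        by (simp add: sum.distrib sum_subtractf sum_distrib_left sum_divide_distrib)
    qed
    have Ey: "(\<Sum>e\<in>Ey_e. \<rho> * HY e * (Uy_s e - gy e / \<rho>)^2 * h^2)
        = (\<Sum>e\<in>Ey_e. \<rho> * HY e * (Uy_s e)^2 * h^2) - 2 * B + Qy / \<rho>"
    proof -
      have "(\<Sum>e\<in>Ey_e. \<rho> * HY e * (Uy_s e - gy e / \<rho>)^2 * h^2)
        = (\<Sum>e\<in>Ey_e. \<rho> * HY e * (Uy_s e)^2 * h^2 - 2 * (HY e * Uy_s e * gy e * h^2) + HY e * gy e * gy e * h^2 / \<rho>)"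
        using rho by (intro sum.cong) (auto simp: field_simps power2_eq_square)
      thus ?thesis unfolding B_def Qy_def
        by (simp add: sum.distrib sum_subtractf sum_distrib_left sum_divide_distrib)
    qed
    have nrm: "\<And>w::real\<times>real. (norm w)^2 = fst w * fst w + snd w * snd w"
      by (simp add: norm_prod_def power2_eq_square)
    have aa: "dot2 a a \<ge> 0" by (simp add: dot2_def)
    have key: "Eh \<Omega> h \<rho> m II Ux_s Uy_s v_s \<omega>_s - Eh \<Omega> h \<rho> m II
           (\<lambda>e. Ux_s e - Gx h p e / \<rho>) (\<lambda>e. Uy_s e - Gy h p e / \<rho>)
           (v_s - (1 / m) *\<^sub>R a) (\<omega>_s - (1 / II) * b)
        = A + B - Qx / (2*\<rho>) - Qy / (2*\<rho>) + dot2 a v_s - dot2 a a / (2*m) + \<omega>_s * b - b*b/(2*II)"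
      unfolding Eh_def Ex_e_def[symmetric] Ey_e_def[symmetric] HX_def[symmetric] HY_def[symmetric]
        gx_def[symmetric] gy_def[symmetric] Ex Ey nrm
      using mpos IIpos rho by (simp add: dot2_def field_simps)
    have "A + B - Qx / (2*\<rho>) - Qy / (2*\<rho>) + dot2 a v_s - dot2 a a / (2*m) + \<omega>_s * b - b*b/(2*II)
        = (Qx / \<rho> + Qy / \<rho> + dot2 a a / m + b * b / II) / 2"
      using main by (simp add: field_simps)
    also have "\<dots> \<ge> 0" using Qx0 Qy0 aa rho mpos IIpos by (simp add: add_nonneg_nonneg)
    finally show ?thesis using key unfolding a_def b_def S_def by linarith
  qed
qed

end
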